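(* For any $n\in\mathbb{N}$ with $n\geq2$, the language $({}_1L)\delta_R=\{(u,v)\delta_R: u,v\in L,\ 1u\equiv_{\mathrm{rps}_n}v\}$ is not regular, where $L=\bigcup_{B\subseteq\mathcal{A}_n}L^B$, with $L^\emptyset=\{\varepsilon\}$, $L^B=L^{(a_1)}\cdots L^{(a_k)}$ for $B=\{a_1<\cdots<a_k\}\neq\emptyset$, and $L^{(j)}=\{n\}^*\{n-1\}^*\cdots\{j+1\}^*\{j\}^+$ for $j\in\mathcal{A}_n$.
   Context: Let $\mathcal{A}_n=\{1<2<\cdots<n\}$. An rPS tableau is a finite (possibly empty) sequence of nonempty bottom-justified columns of boxes filled with positive integers, such that the entries of each column are weakly decreasing from top to bottom and the bottom entries of the columns form a strictly increasing sequence from left to right. Right insertion of a symbol $a$ into an rPS tableau $B$: if $a$ is strictly greater than every entry of the bottom row, append a new column consisting of $a$ at the right end; otherwise, let $z$ be the leftmost bottom-row entry with $z\geq a$ and put $a$ in a new box at the bottom of the column of $z$ (the previous entries of that column move up one box). For $w=w_1\cdots w_k$, $\mathfrak{R}_r(w)$ is obtained by starting with the empty tableau and right-inserting $w_1,\dots,w_k$ in order. $u\equiv_{\mathrm{rps}_n}v$ means $\mathfrak{R}_r(u)=\mathfrak{R}_r(v)$ for $u,v\in\mathcal{A}_n^*$. For the padding symbol $\$\notin\mathcal{A}_n$, $\delta_R:\mathcal{A}_n^*\times\mathcal{A}_n^*\to((\mathcal{A}_n\cup\{\$\})\times(\mathcal{A}_n\cup\{\$\}))^*$ sends $(u_1\cdots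 u_m,v_1\cdots v_p)$ to the word of pairs $(u_i,v_i)$ obtained after padding the shorter word on the right with $\$$'s to equal length. *)

theory Defs
  imports Main
begin

text \<open>An rPS tableau is represented as the list of its columns from left to right;
  each column is a nonempty list of its entries listed from the BOTTOM upwards,
  so the head of a column is its bottom-row entry.\<close>

fun rps_insert :: "nat list list \<Rightarrow> nat \<Rightarrow> nat list list" where
  "rps_insert [] a = [[a]]"
| "rps_insert (c # cs) a =
     (if a \<le> hd c then (a # c) # cs else c # rps_insert cs a)"

definition rps_read :: "nat list \<Rightarrow> nat list list" where
  "rps_read w = foldl rps_insert [] w"

definition rps_equiv :: "nat list \<Rightarrow> nat list \<Rightarrow> bool" where
  "rps_equiv u v \<longleftrightarrow> rps_read u = rps_read v"

text \<open>Padded pairing; the padding symbol \$ is None.\<close>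
definition delta_R :: "nat list \<Rightarrow> nat list \<Rightarrow> (nat option \<times> nat option) list" where
  "delta_R u v = zip (map Some u @ replicate (length v - length u) None)
                     (map Some v @ replicate (length u - length v) None)"

definition lang_concat :: "'a list set \<Rightarrow> 'a list set \<Rightarrow> 'a list set" where
  "lang_concat A B = {u @ v | u v. u \<in> A \<and> v \<in> B}"

definition Lj :: "nat \<Rightarrow> nat \<Rightarrow> nat list set" where
  "Lj n j = {concat (map (\<lambda>i. replicate (k i) i) (rev [j..<Suc n])) | k. k j \<ge> 1}"

definition LB :: "nat \<Rightarrow> nat set \<Rightarrow> nat list set" where
  "LB n B = foldr (\<lambda>a acc. lang_concat (Lj n a) acc) (sorted_list_of_set B) {[]}"

definition Lang :: "nat \<Rightarrow> nat list set" where
  "Lang n = (\<Union>B \<in> Pow {1..n}. LB n B)"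

definition Lang_1L :: "nat \<Rightarrow> (nat option \<times> nat option) list set" where
  "Lang_1L n = {delta_R u v | u v. u \<in> Lang n \<and> v \<in> Lang n \<and> rps_equiv (1 # u) v}"

definition pair_alphabet :: "nat \<Rightarrow> (nat option \<times> nat option) set" where
  "pair_alphabet n = insert None (Some ` {1..n}) \<times> insert None (Some ` {1..n})"

definition regular_over :: "'a set \<Rightarrow> 'a list set \<Rightarrow> bool" where
  "regular_over Alph L \<longleftrightarrow>
     (\<exists>(Q :: nat set) q0 (d :: nat \<Rightarrow> 'a \<Rightarrow> nat) F.
        finite Q \<and> q0 \<in> Q \<and> (\<forall>q\<in>Q. \<forall>a\<in>Alph. d q a \<in> Q) \<and> F \<subseteq> Q \<and>
        L = {w \<in> lists Alph. foldl d q0 w \<in> F})"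

end

theory Submission
  imports Defs
begin

lemma cnt_ins: "count_list (concat (rps_insert T a)) x = count_list (concat T) x + (if a = x then 1 else 0)"
  by (induction T a rule: rps_insert.induct) auto

lemma cnt_foldl: "count_list (concat (foldl rps_insert T w)) x = count_list (concat T) x + count_list w x"
  by (induction w arbitrary: T) (auto simp: cnt_ins)

lemma cnt_read: "count_list (concat (rps_read w)) x = count_list w x"
  by (simp add: rps_read_def cnt_foldl)

lemma fold2: "foldl rps_insert [replicate (Suc a) 1, replicate (Suc m) 2] (replicate k 2)
   = [replicate (Suc a) 1, replicate (Suc (m+k)) 2]"
proof (induction k arbitrary: m)
  case (Suc k)
  have "foldl rps_insert [replicate (Suc a) 1, replicate (Suc m) 2] (replicate (Suc k) 2)
     = foldl rps_insert [replicate (Suc a) 1, replicate (Suc (Suc m)) 2] (replicate k 2)" by simp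
  then show ?case using Suc.IH[of "Suc m"] by simp
qed simp

lemma fold1: "foldl rps_insert (replicate (Suc m) 1 # cs) (replicate k 1)
   = (replicate (Suc (m+k)) 1 # cs)"
proof (induction k arbitrary: m)
  case (Suc k)
  have "foldl rps_insert (replicate (Suc m) 1 # cs) (replicate (Suc k) 1)
     = foldl rps_insert (replicate (Suc (Suc m)) 1 # cs) (replicate k 1)" by simp
  then show ?case using Suc.IH[of "Suc m"] by simp
qed simp

lemma read_u: "rps_read (1 # replicate (Suc m) 2 @ replicate (Suc m) 1)
   = [replicate (Suc (Suc m)) 1, replicate (Suc m) 2]"
proof -
  have "rps_read (1 # replicate (Suc m) 2 @ replicate (Suc m) 1) =
     foldl rps_insert (foldl rps_insert [replicate 1 1, replicate 1 2] (replicate m 2)) (replicate (Suc m) 1)"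
    by (simp add: rps_read_def)
  also have "\<dots> = [replicate (Suc (Suc m)) 1, replicate (Suc m) 2]"
    using fold2[of 0 0 m] fold1[of 0 "[replicate (Suc m) 2]" "Suc m"] by simp
  finally show ?thesis .
qed

lemma read_v: "rps_read (replicate (Suc (Suc m)) 1 @ replicate (Suc m) 2)
   = [replicate (Suc (Suc m)) 1, replicate (Suc m) 2]"
proof -
  have "rps_read (replicate (Suc (Suc m)) 1 @ replicate (Suc m) 2) =
     foldl rps_insert (foldl rps_insert [replicate 1 1] (replicate (Suc m) 1)) (replicate (Suc m) 2)"
    by (simp add: rps_read_def)
  also have "\<dots> = foldl rps_insert [replicate (Suc (Suc m)) 1, replicate 1 2] (replicate m 2)"
    using fold1[of 0 "[]" "Suc m"] by simp
  also have "\<dots> = [replicate (Suc (Suc m)) 1, replicate (Suc m) 2]"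
    using fold2[of "Suc m" 0 m] by simp
  finally show ?thesis .
qed

lemma map_fst_delta: "map fst (delta_R u v) = map Some u @ replicate (length v - length u) None"
  unfolding delta_R_def by (subst map_fst_zip) auto

lemma map_snd_delta: "map snd (delta_R u v) = map Some v @ replicate (length u - length v) None"
  unfolding delta_R_def by (subst map_snd_zip) auto

lemma filt_the: "map the (filter (\<lambda>x. x \<noteq> None) (map Some xs @ replicate k None)) = xs"
proof -
  have "filter (\<lambda>x. x \<noteq> None) (replicate k None) = []" by (induction k) auto
  moreover have "filter (\<lambda>x. x \<noteq> None) (map Some xs) = map Some xs" by (induction xs) auto
  ultimately show ?thesis by simp
qed

lemma delta_inj: assumes "delta_R u v = delta_R u' v'" shows "u = u' \<and> v = v'"
proof -
  from assms have "map fst (delta_R u v) = map fst (delta_R u' v')"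
    "map snd (delta_R u v) = map snd (delta_R u' v')" by auto
  then show ?thesis unfolding map_fst_delta map_snd_delta by (metis filt_the)
qed

lemma concat_zero: "\<forall>x\<in>set xs. k x = 0 \<Longrightarrow> concat (map (\<lambda>i. replicate (k i) i) xs) = []"
  by (induction xs) auto

lemma upt1: "n \<ge> 2 \<Longrightarrow> rev [1..<Suc n] = rev [3..<Suc n] @ [2, 1]"
proof -
  assume "n \<ge> 2"
  then have "[1..<Suc n] = 1 # 2 # [3..<Suc n]"
    by (simp add: upt_conv_Cons numeral_3_eq_3)
  then show ?thesis by simp
qed
lemma upt2: "n \<ge> 2 \<Longrightarrow> rev [2..<Suc n] = rev [3..<Suc n] @ [2]"
proof -
  assume "n \<ge> 2"
  then have "[2..<Suc n] = 2 # [3..<Suc n]"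
    by (simp add: upt_conv_Cons numeral_3_eq_3)
  then show ?thesis by simp
qed

lemma u_L1: assumes "n \<ge> 2" "i \<ge> 1" shows "replicate j 2 @ replicate i 1 \<in> Lj n 1"
proof -
  let ?k = "\<lambda>x::nat. if x = 1 then i else if x = 2 then j else 0"
  have "concat (map (\<lambda>x. replicate (?k x) x) (rev [1..<Suc n])) = replicate j 2 @ replicate i 1"
    unfolding upt1[OF assms(1)] by (simp add: concat_zero)
  then show ?thesis unfolding Lj_def using assms by (intro CollectI exI[of _ ?k]) auto
qed

lemma v_L2: assumes "n \<ge> 2" "i \<ge> 1" shows "replicate i 2 \<in> Lj n 2"
proof -
  let ?k = "\<lambda>x::nat. if x = 2 then i else 0"
  have "concat (map (\<lambda>x. replicate (?k x) x) (rev [2..<Suc n])) = replicate i 2"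
    unfolding upt2[OF assms(1)] by (simp add: concat_zero)
  then show ?thesis unfolding Lj_def using assms by (intro CollectI exI[of _ ?k]) auto
qed

lemma u_Lang: assumes "n \<ge> 2" "i \<ge> 1" shows "replicate j 2 @ replicate i 1 \<in> Lang n"
proof -
  have "LB n {1} = lang_concat (Lj n 1) {[]}" by (simp add: LB_def)
  moreover have "replicate j 2 @ replicate i 1 \<in> lang_concat (Lj n 1) {[]}"
    using u_L1[OF assms] unfolding lang_concat_def by auto
  moreover have "{1} \<in> Pow {1..n}" using assms by auto
  ultimately show ?thesis unfolding Lang_def by blast
qed

lemma v_Lang: assumes "n \<ge> 2" "i \<ge> 1" shows "replicate (Suc j) 1 @ replicate i 2 \<in> Lang n"
proof -
  have "sorted_list_of_set {1::nat, 2} = [1,2]" by simp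
  then have "LB n {1,2} = lang_concat (Lj n 1) (lang_concat (Lj n 2) {[]})" by (simp add: LB_def)
  moreover have "replicate (Suc j) 1 @ replicate i 2 \<in> lang_concat (Lj n 1) (lang_concat (Lj n 2) {[]})"
  proof -
    have "replicate i 2 \<in> lang_concat (Lj n 2) {[]}"
      using v_L2[OF assms] unfolding lang_concat_def by auto
    moreover have "replicate (Suc j) 1 \<in> Lj n 1"
      using u_L1[OF assms(1), of "Suc j" 0] by simp
    ultimately show ?thesis unfolding lang_concat_def by blast
  qed
  moreover have "{1,2} \<in> Pow {1..n}" using assms by auto
  ultimately show ?thesis unfolding Lang_def by blast
qed

definition tsuf :: "nat \<Rightarrow> (nat option \<times> nat option) list" where
  "tsuf i = delta_R (replicate i 1) (1 # replicate i 2)"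

lemma zr: "zip (replicate j a @ xs) (replicate j b @ ys) = replicate j (a,b) @ zip xs ys"
  by (induction j) auto

lemma delta_split: "delta_R (replicate j 2 @ replicate i 1) (replicate (Suc j) 1 @ replicate i 2)
   = replicate j (Some 2, Some 1) @ tsuf i"
proof -
  have e1: "map Some (replicate j 2 @ replicate i 1) @ replicate (length (replicate (Suc j) 1 @ replicate i (2::nat)) - length (replicate j 2 @ replicate i (1::nat))) None
     = replicate j (Some 2) @ (map Some (replicate i 1) @ replicate (length (1 # replicate i (2::nat)) - length (replicate i (1::nat))) None)"
    by simp
  have e2: "map Some (replicate (Suc j) 1 @ replicate i 2) @ replicate (length (replicate j 2 @ replicate i (1::nat)) - length (replicate (Suc j) 1 @ replicate i (2::nat))) None
     = replicate j (Some 1) @ (map Some (1 # replicate i 2) @ replicate (length (replicate i (1::nat)) - length (1 # replicate i (2::nat))) None)"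
    by (simp add: replicate_app_Cons_same)
  show ?thesis unfolding delta_R_def tsuf_def e1 e2 zr ..
qed

lemma in_lang: assumes "n \<ge> 2" "i \<ge> 1"
  shows "replicate i (Some 2, Some 1) @ tsuf i \<in> Lang_1L n"
proof -
  obtain m where m: "i = Suc m" using assms(2) by (cases i) auto
  have "rps_equiv (1 # replicate i 2 @ replicate i 1) (replicate (Suc i) 1 @ replicate i 2)"
    unfolding rps_equiv_def m using read_u read_v by simp
  then show ?thesis unfolding Lang_1L_def delta_split[symmetric]
    using u_Lang[OF assms] v_Lang[OF assms] by blast
qed

lemma cnt_rep: "count_list (replicate j x) x = j"
  by (induction j) auto

lemma notin_lang: assumes "i \<noteq> j"
  shows "replicate j (Some 2, Some 1) @ tsuf i \<notin> Lang_1L n"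
proof
  assume "replicate j (Some 2, Some 1) @ tsuf i \<in> Lang_1L n"
  then obtain u v where uv: "replicate j (Some 2, Some 1) @ tsuf i = delta_R u v" "rps_equiv (1 # u) v"
    unfolding Lang_1L_def by blast
  from uv(1) delta_split[of j i] have "u = replicate j 2 @ replicate i 1"
    "v = replicate (Suc j) 1 @ replicate i 2" using delta_inj by metis+
  then have "count_list (1 # u) 2 = j" "count_list v 2 = i"
    by (simp_all add: count_list_append cnt_rep)
  moreover have "count_list (1 # u) 2 = count_list v 2"
    using uv(2) cnt_read unfolding rps_equiv_def by metis
  ultimately show False using assms by simp
qed

lemma foldl_in: "q \<in> Q \<Longrightarrow> \<forall>q\<in>Q. \<forall>a\<in>A. d q a \<in> Q \<Longrightarrow> w \<in> lists A \<Longrightarrow> foldl d q w \<in> Q"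
  by (induction w arbitrary: q) auto

theorem proposition6p4:
  fixes n :: nat
  assumes "n \<ge> 2"
  shows "\<not> regular_over (pair_alphabet n) (Lang_1L n)"
proof
  assume "regular_over (pair_alphabet n) (Lang_1L n)"
  then obtain Q q0 d F where fin: "finite (Q::nat set)" and q0: "q0 \<in> Q"
    and cl: "\<forall>q\<in>Q. \<forall>a\<in>pair_alphabet n. d q a \<in> Q" and FQ: "F \<subseteq> Q"
    and L: "Lang_1L n = {w \<in> lists (pair_alphabet n). foldl d q0 w \<in> F}"
    unfolding regular_over_def by blast
  have p: "(Some 2, Some 1) \<in> pair_alphabet n" using assms by (auto simp: pair_alphabet_def)
  have rl: "replicate k (Some 2, Some 1) \<in> lists (pair_alphabet n)" for k using p by auto
  define f where "f k = foldl d q0 (replicate k (Some 2, Some 1))" for k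
  have "f ` {1..card Q + 1} \<subseteq> Q" unfolding f_def using foldl_in[OF q0 cl rl] by auto
  then have "\<not> inj_on f {1..card Q + 1}"
    using card_inj_on_le[of f "{1..card Q + 1}" Q] fin by auto
  then obtain i j where ij: "i \<in> {1..card Q + 1}" "j \<in> {1..card Q + 1}" "i \<noteq> j" "f i = f j"
    unfolding inj_on_def by blast
  have "replicate i (Some 2, Some 1) @ tsuf i \<in> Lang_1L n" using in_lang assms ij by auto
  then have A: "tsuf i \<in> lists (pair_alphabet n)" "foldl d (f i) (tsuf i) \<in> F"
    unfolding L f_def by auto
  have "replicate j (Some 2, Some 1) @ tsuf i \<in> Lang_1L n"
    unfolding L using A rl ij(4) by (auto simp: f_def)
  then show False using notin_lang ij(3) by blast
qed

end
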